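(* Assume $H$ is non-degenerate, i.e. $\lambda_N < \lambda_{N+1}$, and denote by $P_{\infty,\infty}$ the minimizer of $\min_{P} \operatorname{tr}(HP)$ subject to $\operatorname{tr} P = N$, $P = P^{\mathrm{T}}$, $0 \preceq P \preceq I$. Let $P_{\infty,\eta}$ be any minimizer of $\min_{P} \operatorname{tr}(HP) + \frac{1}{\eta}\|P\|_1$ subject to the same constraints. Then (a) $0 \le \mathcal{E}_{\infty,\infty}(P_{\infty,\eta}) - \mathcal{E}_{\infty,\infty}(P_{\infty,\infty}) \le \frac{1}{\eta}\|P_{\infty,\infty}\|_1$; (b) $\|P_{\infty,\eta} - P_{\infty,\infty}\|_F^2 \le \frac{2}{\eta}\frac{\|P_{\infty,\infty}\|_1}{\lambda_{N+1}-\lambda_N}$. In particular, $\lim_{\eta\to\infty}\mathcal{E}_{\infty,\infty}(P_{\infty,\eta}) = \mathcal{E}_{\infty,\infty}(P_{\infty,\infty})$ and $\lim_{\eta\to\infty}\|P_{\infty,\eta} - P_{\infty,\infty}\|_F = 0$.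
   Context: $H$ is an $n\times n$ real symmetric matrix (discrete Hamiltonian) with eigenpairs $\{\lambda_i,\phi_i\}_{i=1}^n$, eigenvalues ordered increasingly; $N$ is a positive integer (number of electrons). $\|P\|_1 = \sum_{i,j}|p_{ij}|$ denotes the entrywise $\ell_1$ norm of a matrix, $\|\cdot\|_F$ the Frobenius norm, and $A\preceq B$ means $B-A$ is symmetric positive semidefinite. The energy is $\mathcal{E}_{\infty,\infty}(P) = \operatorname{tr}(HP)$, and $\eta>0$ is the $\ell_1$ penalty parameter. The zero temperature minimizer is $P_{\infty,\infty} = \sum_{i=1}^N \phi_i\phi_i^{\mathrm{T}}$. *)

theory Defs
  imports "HOL-Analysis.Analysis"
begin

definition sym_mat :: "real^'n^'n \<Rightarrow> bool" where
  "sym_mat A \<longleftrightarrow> transpose A = A"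

definition loewner_le :: "real^'n^'n \<Rightarrow> real^'n^'n \<Rightarrow> bool" where
  "loewner_le A B \<longleftrightarrow> sym_mat (B - A) \<and> (\<forall>x. 0 \<le> x \<bullet> ((B - A) *v x))"

definition l1_norm :: "real^'n^'n \<Rightarrow> real" where
  "l1_norm P = (\<Sum>i\<in>UNIV. \<Sum>j\<in>UNIV. \<bar>P $ i $ j\<bar>)"

definition frob_norm :: "real^'n^'n \<Rightarrow> real" where
  "frob_norm P = sqrt (\<Sum>i\<in>UNIV. \<Sum>j\<in>UNIV. (P $ i $ j)^2)"

definition outer :: "real^'n \<Rightarrow> real^'n \<Rightarrow> real^'n^'n" where
  "outer u v = (\<chi> i j. u $ i * v $ j)"

definition feasible :: "nat \<Rightarrow> real^'n^'n \<Rightarrow> bool" where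
  "feasible N P \<longleftrightarrow> trace P = real N \<and> sym_mat P \<and> loewner_le 0 P \<and> loewner_le P (mat 1)"

definition energy :: "real^'n^'n \<Rightarrow> real^'n^'n \<Rightarrow> real" where
  "energy H P = trace (H ** P)"

definition is_l1_minimizer :: "real^'n^'n \<Rightarrow> nat \<Rightarrow> real \<Rightarrow> real^'n^'n \<Rightarrow> bool" where
  "is_l1_minimizer H N \<eta> P \<longleftrightarrow> feasible N P \<and>
     (\<forall>Q. feasible N Q \<longrightarrow> energy H P + l1_norm P / \<eta> \<le> energy H Q + l1_norm Q / \<eta>)"

end

theory Submission
  imports Defs
begin

lemma complete:
  fixes phi :: "nat \<Rightarrow> real^'n"
  assumes orth: "\<And>i j. i \<in> {1..CARD('n)} \<Longrightarrow> j \<in> {1..CARD('n)} \<Longrightarrow>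
                 phi i \<bullet> phi j = (if i = j then 1 else 0)"
  shows "x = (\<Sum>i=1..CARD('n). (phi i \<bullet> x) *\<^sub>R phi i)"
proof -
  let ?I = "{1..CARD('n)}"
  let ?S = "phi ` ?I"
  have inj: "inj_on phi ?I"
  proof (rule inj_onI)
    fix i j assume "i \<in> ?I" "j \<in> ?I" "phi i = phi j"
    then show "i = j" using orth[of i j] orth[of i i] by (metis zero_neq_one)
  qed
  have card: "card ?S = CARD('n)" using card_image[OF inj] by simp
  have po: "pairwise orthogonal ?S"
    unfolding pairwise_def orthogonal_def using orth by auto
  have n0: "0 \<notin> ?S" using orth by fastforce
  have ind: "independent ?S" using pairwise_orthogonal_independent[OF po n0] .
  have sp: "UNIV \<subseteq> span ?S"
    by (rule eucl.card_ge_dim_independent[OF _ ind]) (use card in auto)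
  define y where "y = x - (\<Sum>i=1..CARD('n). (phi i \<bullet> x) *\<^sub>R phi i)"
  have oy: "orthogonal y v" if v: "v \<in> ?S" for v
  proof -
    obtain k where k: "k \<in> ?I" "v = phi k" using v by blast
    have "(\<Sum>i\<in>?I. (phi i \<bullet> x) *\<^sub>R phi i) \<bullet> phi k = (\<Sum>i\<in>?I. (phi i \<bullet> x) * (phi i \<bullet> phi k))"
      by (simp add: inner_sum_left)
    also have "\<dots> = (\<Sum>i\<in>?I. if i = k then phi k \<bullet> x else 0)"
      proof (rule sum.cong)
      fix i assume "i \<in> ?I"
      then show "(phi i \<bullet> x) * (phi i \<bullet> phi k) = (if i = k then phi k \<bullet> x else 0)"
        using orth[OF _ k(1), of i] by auto
    qed simp
    also have "\<dots> = phi k \<bullet> x" using k by simp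
    finally show ?thesis unfolding y_def orthogonal_def k
      by (simp add: inner_diff_right inner_commute)
  qed
  have "orthogonal y y" by (rule orthogonal_to_span[OF _ oy]) (use sp in auto)
  then have "y = 0" by (simp add: orthogonal_def)
  then show ?thesis by (simp add: y_def)
qed


lemma sym_mat_iff: "sym_mat A \<longleftrightarrow> (\<forall>i j. A $ i $ j = A $ j $ i)"
  unfolding sym_mat_def transpose_def vec_eq_iff by auto

lemma sym_inner: assumes "sym_mat M" shows "(M *v x) \<bullet> y = x \<bullet> (M *v y)"
proof -
  have "x v* M = M *v x" using assms unfolding sym_mat_def
    by (metis vector_transpose_matrix)
  then show ?thesis by (metis dot_lmul_matrix)
qed

lemma outer_mv: "outer u v *v x = (v \<bullet> x) *\<^sub>R u"
  by (simp add: outer_def matrix_vector_mult_def vec_eq_iff inner_vec_def sum_distrib_left algebra_simps)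

lemma sum_mv: "(\<Sum>i\<in>A. M i) *v x = (\<Sum>i\<in>A. M i *v x)"
  by (induction A rule: infinite_finite_induct) (auto simp: matrix_vector_mult_add_rdistrib)

locale onb =
  fixes phi :: "nat \<Rightarrow> real^'n"
  assumes orth: "\<And>i j. i \<in> {1..CARD('n)} \<Longrightarrow> j \<in> {1..CARD('n)} \<Longrightarrow>
                 phi i \<bullet> phi j = (if i = j then 1 else 0)"
begin


lemma expand: "x = (\<Sum>i\<in>{1..CARD('n)}. (phi i \<bullet> x) *\<^sub>R phi i)"
  using complete[OF orth] by blast

lemma parseval: "x \<bullet> x = (\<Sum>i\<in>{1..CARD('n)}. (phi i \<bullet> x)^2)"
proof -
  have "x \<bullet> x = x \<bullet> (\<Sum>i\<in>{1..CARD('n)}. (phi i \<bullet> x) *\<^sub>R phi i)" using expand by metis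
  also have "\<dots> = (\<Sum>i\<in>{1..CARD('n)}. (phi i \<bullet> x)^2)"
    by (simp add: inner_sum_right power2_eq_square inner_commute)
  finally show ?thesis .
qed

lemma delta: "(\<Sum>i\<in>{1..CARD('n)}. phi i $ j * phi i $ k) = (if j = k then 1 else 0)"
proof -
  have "axis k (1::real) $ j = (\<Sum>i\<in>{1..CARD('n)}. (phi i \<bullet> axis k 1) *\<^sub>R phi i) $ j"
    using expand by metis
  moreover have "phi i \<bullet> axis k 1 = phi i $ k" for i
    by (simp add: inner_axis)
  ultimately show ?thesis by (simp add: sum_component axis_def mult.commute)
qed

lemma trace_basis: "trace M = (\<Sum>i\<in>{1..CARD('n)}. phi i \<bullet> (M *v phi i))"
proof -
  have "(\<Sum>i\<in>{1..CARD('n)}. phi i \<bullet> (M *v phi i)) = (\<Sum>i\<in>{1..CARD('n)}. \<Sum>j\<in>UNIV. \<Sum>k\<in>UNIV. M$j$k * (phi i $ j * phi i $ k))"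
    by (simp add: inner_vec_def matrix_vector_mult_def sum_distrib_left algebra_simps)
  also have "\<dots> = (\<Sum>j\<in>UNIV. \<Sum>i\<in>{1..CARD('n)}. \<Sum>k\<in>UNIV. M$j$k * (phi i $ j * phi i $ k))"
    by (rule sum.swap)
  also have "\<dots> = (\<Sum>j\<in>UNIV. \<Sum>k\<in>UNIV. \<Sum>i\<in>{1..CARD('n)}. M$j$k * (phi i $ j * phi i $ k))"
    by (rule sum.cong[OF refl], rule sum.swap)
  also have "\<dots> = (\<Sum>j\<in>UNIV. \<Sum>k\<in>UNIV. M$j$k * (\<Sum>i\<in>{1..CARD('n)}. phi i $ j * phi i $ k))"
    by (simp add: sum_distrib_left)
  also have "\<dots> = (\<Sum>j\<in>UNIV. M$j$j)"
    by (simp only: delta) (simp add: if_distrib cong: if_cong)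
  finally show ?thesis by (simp add: trace_def)
qed

lemma frob_basis: "(\<Sum>j\<in>UNIV. \<Sum>k\<in>UNIV. (D $ j $ k)^2) = (\<Sum>i\<in>{1..CARD('n)}. (D *v phi i) \<bullet> (D *v phi i))"
proof -
  have c: "(D *v phi i) $ j = phi i \<bullet> D $ j" for i j
    by (simp add: matrix_vector_mult_def inner_vec_def mult.commute)
  have "(\<Sum>i\<in>{1..CARD('n)}. (D *v phi i) \<bullet> (D *v phi i)) = (\<Sum>i\<in>{1..CARD('n)}. \<Sum>j\<in>UNIV. (phi i \<bullet> D $ j)^2)"
    by (simp add: inner_vec_def c power2_eq_square)
  also have "\<dots> = (\<Sum>j\<in>UNIV. \<Sum>i\<in>{1..CARD('n)}. (phi i \<bullet> D $ j)^2)" by (rule sum.swap)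
  also have "\<dots> = (\<Sum>j\<in>UNIV. D $ j \<bullet> D $ j)" by (simp add: parseval)
  also have "\<dots> = (\<Sum>j\<in>UNIV. \<Sum>k\<in>UNIV. (D $ j $ k)^2)" by (simp add: inner_vec_def power2_eq_square)
  finally show ?thesis by simp
qed

end

lemma quad_nonneg_disc:
  fixes a b c :: real
  assumes "\<And>t. 0 \<le> a + 2*t*b + t^2*c" and c0: "0 \<le> c"
  shows "b^2 \<le> a * c"
proof (cases "c = 0")
  case True
  show ?thesis
  proof (cases "b = 0")
    case False
    have "0 \<le> a + 2*(-(a+1)/(2*b))*b + (-(a+1)/(2*b))^2*c" by (rule assms(1))
    then show ?thesis using False True by (simp add: field_simps)
  qed (use True assms(1)[of 0] in simp)
next
  case False
  with False c0 have cp: "0 < c" by simp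
  have "0 \<le> a + 2*(-b/c)*b + (-b/c)^2*c" by (rule assms(1))
  then have "0 \<le> a - b^2/c" using cp by (simp add: power2_eq_square field_simps)
  then show ?thesis using cp by (simp add: field_simps)
qed

lemma psd_cs:
  assumes sym: "sym_mat P" and psd: "\<And>x. 0 \<le> x \<bullet> (P *v x)"
  shows "(x \<bullet> (P *v y))^2 \<le> (x \<bullet> (P *v x)) * (y \<bullet> (P *v y))"
proof (rule quad_nonneg_disc)
  show "0 \<le> y \<bullet> (P *v y)" by (rule psd)
next
  fix t :: real
  have "0 \<le> (x + t *\<^sub>R y) \<bullet> (P *v (x + t *\<^sub>R y))" by (rule psd)
  also have "\<dots> = x \<bullet> (P *v x) + 2*t*(x \<bullet> (P *v y)) + t^2 * (y \<bullet> (P *v y))"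
    using inner_commute[of y "P *v x"] sym_inner[OF sym, of x y]
    by (simp add: matrix_vector_right_distrib matrix_vector_mult_scaleR inner_add_left inner_add_right
         power2_eq_square algebra_simps)
  finally show "0 \<le> x \<bullet> (P *v x) + 2*t*(x \<bullet> (P *v y)) + t^2 * (y \<bullet> (P *v y))" .
qed

lemma feasible_facts:
  assumes "feasible N P"
  shows "sym_mat P" "\<And>x. 0 \<le> x \<bullet> (P *v x)" "\<And>x. x \<bullet> (P *v x) \<le> x \<bullet> x" "trace P = real N"
  using assms unfolding feasible_def loewner_le_def
  by (auto simp: matrix_vector_mult_diff_rdistrib inner_diff_right)

lemma sq_le:
  assumes "feasible N P"
  shows "(P *v x) \<bullet> (P *v x) \<le> x \<bullet> (P *v x)"
proof -
  note f = feasible_facts[OF assms]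
  define a where "a = x \<bullet> (P *v x)"
  define b where "b = (P *v x) \<bullet> (P *v x)"
  define c where "c = (P *v x) \<bullet> (P *v (P *v x))"
  have "b = x \<bullet> (P *v (P *v x))" unfolding b_def by (rule sym_inner[OF f(1)])
  then have "b^2 \<le> a * c" using psd_cs[OF f(1) f(2), of x "P *v x"] by (simp add: a_def c_def)
  moreover have "c \<le> b" unfolding b_def c_def by (rule f(3))
  moreover have "0 \<le> a" unfolding a_def by (rule f(2))
  moreover have "0 \<le> b" unfolding b_def by simp
  ultimately have "b * b \<le> a * b" by (metis mult_left_mono order_trans power2_eq_square)
  then have "b \<le> a" using \<open>0 \<le> b\<close> \<open>0 \<le> a\<close>
    by (cases "b = 0") (auto intro: mult_right_le_imp_le)
  then show ?thesis by (simp add: a_def b_def)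
qed


lemma split_sum: "N \<le> n \<Longrightarrow> sum f {1..n} = sum f {1..N} + sum f {Suc N..n}"
proof -
  assume "N \<le> n"
  then have "{1..n} = {1..N} \<union> {Suc N..n}" by auto
  then show ?thesis by (simp add: sum.union_disjoint)
qed

context onb begin

lemma P0_mv:
  assumes "k \<in> {1..CARD('n)}" "N \<le> CARD('n)"
  shows "(\<Sum>i = 1..N. outer (phi i) (phi i)) *v phi k = (if k \<le> N then phi k else 0)"
proof -
  have "(\<Sum>i = 1..N. outer (phi i) (phi i)) *v phi k = (\<Sum>i = 1..N. (phi i \<bullet> phi k) *\<^sub>R phi i)"
    by (simp add: sum_mv outer_mv)
  also have "\<dots> = (\<Sum>i = 1..N. if i = k then phi k else 0)"
  proof (rule sum.cong[OF refl])
    fix i assume "i \<in> {1..N}"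
    then have "i \<in> {1..CARD('n)}" using assms by auto
    then show "(phi i \<bullet> phi k) *\<^sub>R phi i = (if i = k then phi k else 0)"
      using orth[OF _ assms(1), of i] by auto
  qed
  also have "\<dots> = (if k \<le> N then phi k else 0)" using assms by auto
  finally show ?thesis .
qed

lemma energy_formula:
  assumes symH: "sym_mat H" and eig: "\<And>i. i \<in> {1..CARD('n)} \<Longrightarrow> H *v phi i = lam i *\<^sub>R phi i"
  shows "energy H P = (\<Sum>i\<in>{1..CARD('n)}. lam i * (phi i \<bullet> (P *v phi i)))"
proof -
  have "energy H P = (\<Sum>i\<in>{1..CARD('n)}. phi i \<bullet> ((H ** P) *v phi i))"
    unfolding energy_def by (rule trace_basis)
  also have "\<dots> = (\<Sum>i\<in>{1..CARD('n)}. lam i * (phi i \<bullet> (P *v phi i)))"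
  proof (rule sum.cong[OF refl])
    fix i assume i: "i \<in> {1..CARD('n)}"
    have "phi i \<bullet> ((H ** P) *v phi i) = phi i \<bullet> (H *v (P *v phi i))"
      by (simp add: matrix_vector_mul_assoc)
    also have "\<dots> = (H *v phi i) \<bullet> (P *v phi i)" by (rule sym_inner[OF symH, symmetric])
    also have "\<dots> = lam i * (phi i \<bullet> (P *v phi i))" by (simp add: eig[OF i])
    finally show "phi i \<bullet> ((H ** P) *v phi i) = lam i * (phi i \<bullet> (P *v phi i))" .
  qed
  finally show ?thesis .
qed

end

context onb begin

lemma main_bound:
  fixes H P :: "real^'n^'n" and lam :: "nat \<Rightarrow> real"
  assumes symH: "sym_mat H" and eig: "\<And>i. i \<in> {1..CARD('n)} \<Longrightarrow> H *v phi i = lam i *\<^sub>R phi i"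
    and sorted: "\<And>i j. i \<in> {1..CARD('n)} \<Longrightarrow> j \<in> {1..CARD('n)} \<Longrightarrow> i \<le> j \<Longrightarrow> lam i \<le> lam j"
    and Npos: "1 \<le> N" and Nlt: "N < CARD('n)"
    and feas: "feasible N P"
    and P0: "P0 = (\<Sum>i = 1..N. outer (phi i) (phi i))"
  defines "s \<equiv> real N - (\<Sum>i=1..N. phi i \<bullet> (P *v phi i))"
  shows "0 \<le> s" "(lam (N+1) - lam N) * s \<le> energy H P - energy H P0"
    "(frob_norm (P - P0))^2 \<le> 2 * s"
proof -
  note f = feasible_facts[OF feas]
  define d where "d i = phi i \<bullet> (P *v phi i)" for i
  have NI: "N \<le> CARD('n)" using Nlt by simp
  have d01: "0 \<le> d i \<and> d i \<le> 1" if "i \<in> {1..CARD('n)}" for i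
    using f(2)[of "phi i"] f(3)[of "phi i"] orth[OF that that] by (simp add: d_def)
  have sumd: "(\<Sum>i=1..CARD('n). d i) = real N"
    using f(4) trace_basis[of P] by (simp add: d_def)
  have s_alt: "(\<Sum>i=Suc N..CARD('n). d i) = s"
    using sumd split_sum[OF NI, of d] by (simp add: s_def d_def)
  show "0 \<le> s"
  proof -
    have "(\<Sum>i=1..N. d i) \<le> (\<Sum>i=1..N. 1)"
      by (rule sum_mono) (use d01 NI in auto)
    then show ?thesis by (simp add: s_def d_def)
  qed
  have P0mv: "P0 *v phi k = (if k \<le> N then phi k else 0)" if "k \<in> {1..CARD('n)}" for k
    unfolding P0 by (rule P0_mv[OF that NI])
  have EP: "energy H P = (\<Sum>i=1..CARD('n). lam i * d i)"
    using energy_formula[OF symH eig] by (simp add: d_def)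
  have EP0: "energy H P0 = (\<Sum>i=1..N. lam i)"
  proof -
    have "energy H P0 = (\<Sum>i\<in>{1..CARD('n)}. lam i * (phi i \<bullet> (P0 *v phi i)))"
      using energy_formula[OF symH eig] by blast
    also have "\<dots> = (\<Sum>i\<in>{1..CARD('n)}. if i \<le> N then lam i else 0)"
      by (rule sum.cong[OF refl]) (simp add: P0mv orth)
    also have "\<dots> = (\<Sum>i=1..N. lam i)"
      using split_sum[OF NI, of "\<lambda>i. if i \<le> N then lam i else 0"] by simp
    finally show ?thesis .
  qed
  have lo1: "(\<Sum>i=1..N. lam i * d i - lam i) \<ge> (\<Sum>i=1..N. lam N * (d i - 1))"
  proof (rule sum_mono)
    fix i assume i: "i \<in> {1..N}"
    then have "lam i \<le> lam N" using sorted[of i N] NI Npos by auto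
    moreover have "d i - 1 \<le> 0" using d01[of i] i NI by auto
    ultimately have "lam N * (d i - 1) \<le> lam i * (d i - 1)" by (rule mult_right_mono_neg)
    then show "lam N * (d i - 1) \<le> lam i * d i - lam i" by (simp add: algebra_simps)
  qed
  have lo2: "(\<Sum>i=Suc N..CARD('n). lam i * d i) \<ge> (\<Sum>i=Suc N..CARD('n). lam (N+1) * d i)"
  proof (rule sum_mono)
    fix i assume i: "i \<in> {Suc N..CARD('n)}"
    then have "lam (N+1) \<le> lam i" using sorted[of "N+1" i] Nlt by auto
    moreover have "0 \<le> d i" using d01[of i] i Npos by auto
    ultimately show "lam (N+1) * d i \<le> lam i * d i" by (rule mult_right_mono)
  qed
  have "energy H P - energy H P0 = (\<Sum>i=1..N. lam i * d i - lam i) + (\<Sum>i=Suc N..CARD('n). lam i * d i)"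
    unfolding EP EP0 using split_sum[OF NI, of "\<lambda>i. lam i * d i"] by (simp add: sum_subtractf)
  moreover have "(\<Sum>i=1..N. lam N * (d i - 1)) = - lam N * s"
    by (simp add: s_def d_def sum_distrib_left[symmetric] sum_subtractf algebra_simps)
  moreover have "(\<Sum>i=Suc N..CARD('n). lam (N+1) * d i) = lam (N+1) * s"
    by (simp add: sum_distrib_left[symmetric] s_alt)
  ultimately show "(lam (N+1) - lam N) * s \<le> energy H P - energy H P0"
    using lo1 lo2 by (simp add: algebra_simps)
  define D where "D = P - P0"
  have "(frob_norm D)^2 = (\<Sum>j\<in>UNIV. \<Sum>k\<in>UNIV. (D $ j $ k)^2)"
    unfolding frob_norm_def by (simp add: sum_nonneg)
  also have "\<dots> = (\<Sum>i\<in>{1..CARD('n)}. (D *v phi i) \<bullet> (D *v phi i))" by (rule frob_basis)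
  also have "\<dots> = (\<Sum>i=1..N. (D *v phi i) \<bullet> (D *v phi i)) + (\<Sum>i=Suc N..CARD('n). (D *v phi i) \<bullet> (D *v phi i))"
    by (rule split_sum[OF NI])
  also have "\<dots> \<le> (\<Sum>i=1..N. 1 - d i) + (\<Sum>i=Suc N..CARD('n). d i)"
  proof (rule add_mono)
    show "(\<Sum>i=1..N. (D *v phi i) \<bullet> (D *v phi i)) \<le> (\<Sum>i=1..N. 1 - d i)"
    proof (rule sum_mono)
      fix i assume i: "i \<in> {1..N}"
      then have iI: "i \<in> {1..CARD('n)}" using NI by auto
      have Dv: "D *v phi i = P *v phi i - phi i"
        using P0mv[OF iI] i by (simp add: D_def matrix_vector_mult_diff_rdistrib)
      have pp: "(P *v phi i) \<bullet> (P *v phi i) \<le> d i" unfolding d_def by (rule sq_le[OF feas])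
      have "(P *v phi i) \<bullet> phi i = d i" unfolding d_def by (simp add: inner_commute)
      then show "(D *v phi i) \<bullet> (D *v phi i) \<le> 1 - d i"
        using pp orth[OF iI iI] unfolding Dv
        by (simp add: inner_diff_left inner_diff_right inner_commute d_def)
    qed
    show "(\<Sum>i=Suc N..CARD('n). (D *v phi i) \<bullet> (D *v phi i)) \<le> (\<Sum>i=Suc N..CARD('n). d i)"
    proof (rule sum_mono)
      fix i assume i: "i \<in> {Suc N..CARD('n)}"
      then have iI: "i \<in> {1..CARD('n)}" using NI by auto
      have Dv: "D *v phi i = P *v phi i"
        using P0mv[OF iI] i by (simp add: D_def matrix_vector_mult_diff_rdistrib)
      show "(D *v phi i) \<bullet> (D *v phi i) \<le> d i" unfolding Dv d_def by (rule sq_le[OF feas])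
    qed
  qed
  also have "\<dots> = 2 * s"
    using s_alt by (simp add: sum_subtractf s_def d_def)
  finally show "(frob_norm (P - P0))^2 \<le> 2 * s" by (simp add: D_def)
qed

end

context onb begin
lemma P0_feasible:
  assumes NI: "N \<le> CARD('n)"
  shows "feasible N (\<Sum>i = 1..N. outer (phi i) (phi i))"
proof -
  define P0 where "P0 = (\<Sum>i = 1..N. outer (phi i) (phi i))"
  have ent: "P0 $ a $ b = (\<Sum>i=1..N. phi i $ a * phi i $ b)" for a b
    by (simp add: P0_def sum_component outer_def)
  have mv: "P0 *v x = (\<Sum>i=1..N. (phi i \<bullet> x) *\<^sub>R phi i)" for x
    by (simp add: P0_def sum_mv outer_mv)
  have q: "x \<bullet> (P0 *v x) = (\<Sum>i=1..N. (phi i \<bullet> x)^2)" for x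
    by (simp add: mv inner_sum_right power2_eq_square inner_commute)
  have tr: "trace P0 = real N"
  proof -
    have "trace P0 = (\<Sum>i\<in>{1..CARD('n)}. phi i \<bullet> (P0 *v phi i))" by (rule trace_basis)
    also have "\<dots> = (\<Sum>i\<in>{1..CARD('n)}. if i \<le> N then 1 else 0)"
    proof (rule sum.cong[OF refl])
      fix i assume i: "i \<in> {1..CARD('n)}"
      show "phi i \<bullet> (P0 *v phi i) = (if i \<le> N then 1 else 0)"
        unfolding P0_def P0_mv[OF i NI] using orth[OF i i] by simp
    qed
    also have "\<dots> = real N"
      using split_sum[OF NI, of "\<lambda>i. if i \<le> N then 1 else (0::real)"] by simp
    finally show ?thesis .
  qed
  have sym: "sym_mat P0" unfolding sym_mat_iff ent by (simp add: mult.commute)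
  have l0: "loewner_le 0 P0" unfolding loewner_le_def using sym q by (simp add: sum_nonneg)
  have l1: "loewner_le P0 (mat 1)"
    unfolding loewner_le_def
  proof
    show "sym_mat (mat 1 - P0)" using sym unfolding sym_mat_iff by (simp add: mat_def)
    show "\<forall>x. 0 \<le> x \<bullet> ((mat 1 - P0) *v x)"
    proof
      fix x :: "real^'n"
      have "x \<bullet> ((mat 1 - P0) *v x) = x \<bullet> x - x \<bullet> (P0 *v x)"
        by (simp add: matrix_vector_mult_diff_rdistrib inner_diff_right)
      also have "\<dots> = (\<Sum>i=Suc N..CARD('n). (phi i \<bullet> x)^2)"
        unfolding q parseval[of x] using split_sum[OF NI, of "\<lambda>i. (phi i \<bullet> x)^2"] by simp
      finally show "0 \<le> x \<bullet> ((mat 1 - P0) *v x)" by (simp add: sum_nonneg)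
    qed
  qed
  show ?thesis unfolding feasible_def P0_def[symmetric] using tr sym l0 l1 by simp
qed
end

theorem theorem1:
  fixes H :: "real^'n^'n" and lam :: "nat \<Rightarrow> real" and phi :: "nat \<Rightarrow> real^'n"
    and N :: nat and Peta :: "real \<Rightarrow> real^'n^'n"
  assumes symH: "sym_mat H"
    and eig: "\<And>i. i \<in> {1..CARD('n)} \<Longrightarrow> H *v phi i = lam i *\<^sub>R phi i"
    and orth: "\<And>i j. i \<in> {1..CARD('n)} \<Longrightarrow> j \<in> {1..CARD('n)} \<Longrightarrow>
                 phi i \<bullet> phi j = (if i = j then 1 else 0)"
    and sorted: "\<And>i j. i \<in> {1..CARD('n)} \<Longrightarrow> j \<in> {1..CARD('n)} \<Longrightarrow> i \<le> j \<Longrightarrow> lam i \<le> lam j"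
    and Npos: "1 \<le> N" and Nlt: "N < CARD('n)"
    and gap: "lam N < lam (N + 1)"
    and minim: "\<And>\<eta>. \<eta> > 0 \<Longrightarrow> is_l1_minimizer H N \<eta> (Peta \<eta>)"
  defines "P0 \<equiv> (\<Sum>i = 1..N. outer (phi i) (phi i))"
  shows "(\<forall>\<eta>>0. 0 \<le> energy H (Peta \<eta>) - energy H P0 \<and>
                 energy H (Peta \<eta>) - energy H P0 \<le> l1_norm P0 / \<eta>)
       \<and> (\<forall>\<eta>>0. (frob_norm (Peta \<eta> - P0))^2 \<le> (2 / \<eta>) * (l1_norm P0 / (lam (N + 1) - lam N)))
       \<and> ((\<lambda>\<eta>. energy H (Peta \<eta>)) \<longlongrightarrow> energy H P0) at_top
       \<and> ((\<lambda>\<eta>. frob_norm (Peta \<eta> - P0)) \<longlongrightarrow> 0) at_top"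
proof -
  interpret onb phi using orth by unfold_locales
  have NI: "N \<le> CARD('n)" using Nlt by simp
  have F0: "feasible N P0" unfolding P0_def by (rule P0_feasible[OF NI])
  define g where "g = lam (N + 1) - lam N"
  have gp: "0 < g" using gap by (simp add: g_def)
  define C where "C = l1_norm P0"
  have C0: "0 \<le> C" unfolding C_def l1_norm_def by (simp add: sum_nonneg)
  have key: "0 \<le> energy H (Peta \<eta>) - energy H P0 \<and>
             energy H (Peta \<eta>) - energy H P0 \<le> C / \<eta> \<and>
             (frob_norm (Peta \<eta> - P0))^2 \<le> (2 / \<eta>) * (C / g)" if eta: "\<eta> > 0" for \<eta>
  proof -
    let ?P = "Peta \<eta>"
    have m: "is_l1_minimizer H N \<eta> ?P" by (rule minim[OF eta])
    have FP: "feasible N ?P" using m unfolding is_l1_minimizer_def by blast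
    have le: "energy H ?P + l1_norm ?P / \<eta> \<le> energy H P0 + C / \<eta>"
      using m F0 unfolding is_l1_minimizer_def C_def by blast
    have "0 \<le> l1_norm ?P / \<eta>" unfolding l1_norm_def using eta by (simp add: sum_nonneg)
    with le have up: "energy H ?P - energy H P0 \<le> C / \<eta>" by linarith
    define s where "s = real N - (\<Sum>i=1..N. phi i \<bullet> (?P *v phi i))"
    have b: "0 \<le> s" "g * s \<le> energy H ?P - energy H P0" "(frob_norm (?P - P0))^2 \<le> 2 * s"
      using main_bound[OF symH eig sorted Npos Nlt FP P0_def[THEN meta_eq_to_obj_eq]] unfolding s_def g_def by auto
    have gs: "0 \<le> g * s" using gp b(1) by simp
    have "g * s \<le> C / \<eta>" using b(2) up by linarith
    then have "s \<le> (C / \<eta>) / g" using gp by (subst pos_le_divide_eq) (auto simp: mult.commute)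
    moreover have "(2 / \<eta>) * (C / g) = 2 * ((C / \<eta>) / g)" by simp
    ultimately have "2 * s \<le> (2 / \<eta>) * (C / g)" by linarith
    then show ?thesis using b gs up by linarith
  qed
  have evpos: "eventually (\<lambda>\<eta>::real. \<eta> > 0) at_top" by (rule eventually_gt_at_top)
  have lim0: "((\<lambda>\<eta>::real. K / \<eta>) \<longlongrightarrow> 0) at_top" for K :: real
    by (rule tendsto_divide_0[OF tendsto_const filterlim_at_top_imp_at_infinity[OF filterlim_ident]])
  have limE: "((\<lambda>\<eta>. energy H (Peta \<eta>)) \<longlongrightarrow> energy H P0) at_top"
  proof (rule tendsto_sandwich[OF _ _ tendsto_const])
    show "eventually (\<lambda>\<eta>. energy H P0 \<le> energy H (Peta \<eta>)) at_top"
      using evpos by eventually_elim (use key in auto)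
    show "eventually (\<lambda>\<eta>. energy H (Peta \<eta>) \<le> energy H P0 + C / \<eta>) at_top"
      using evpos by eventually_elim (use key in force)
    show "((\<lambda>\<eta>. energy H P0 + C / \<eta>) \<longlongrightarrow> energy H P0) at_top"
      using tendsto_add[OF tendsto_const lim0[of C]] by simp
  qed
  have limF: "((\<lambda>\<eta>. frob_norm (Peta \<eta> - P0)) \<longlongrightarrow> 0) at_top"
  proof (rule tendsto_sandwich[OF _ _ tendsto_const])
    show "eventually (\<lambda>\<eta>. 0 \<le> frob_norm (Peta \<eta> - P0)) at_top"
      by (simp add: frob_norm_def sum_nonneg)
    show "eventually (\<lambda>\<eta>. frob_norm (Peta \<eta> - P0) \<le> sqrt ((2 * (C / g)) / \<eta>)) at_top"
      using evpos
    proof eventually_elim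
      case (elim \<eta>)
      have "(frob_norm (Peta \<eta> - P0))^2 \<le> (2 * (C / g)) / \<eta>" using key[OF elim] by (simp add: mult.commute)
      then have "sqrt ((frob_norm (Peta \<eta> - P0))^2) \<le> sqrt ((2 * (C / g)) / \<eta>)"
        by (rule real_sqrt_le_mono)
      moreover have "0 \<le> frob_norm (Peta \<eta> - P0)" by (simp add: frob_norm_def sum_nonneg)
      ultimately show ?case by (simp only: real_sqrt_abs abs_of_nonneg)
    qed
    show "((\<lambda>\<eta>. sqrt ((2 * (C / g)) / \<eta>)) \<longlongrightarrow> 0) at_top"
      using tendsto_real_sqrt[OF lim0[of "2 * (C / g)"]] by simp
  qed
  show ?thesis using key limE limF unfolding C_def g_def by blast
qed

end
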